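(* Let $\lambda>0$, $t>0$ and $n\ge 2$. Consider a Yule tree with rate $\lambda$ whose initial bifurcation occurred time $t$ before the present, conditioned on having exactly $n$ leaves at the present. Let $TL_n(t)$ be the sum of all its edge lengths and $L_n(t)=\mathbb{E}[TL_n(t)]$. Then $$L_n(t)=2t+\frac{n-2}{\lambda}\bigl(1-y(\lambda t)\bigr),\qquad y(x):=\frac{x e^{-x}}{1-e^{-x}},$$ and $y$ is strictly decreasing on $(0,\infty)$ with $\lim_{x\to 0^+}y(x)=1$ and $\lim_{x\to\infty}y(x)=0$. *)

theory Defs
  imports "HOL-Probability.Probability"
begin

text \<open>Yule (pure-birth) process started from the initial bifurcation, i.e. with 2 lineages.
  While there are k+2 lineages, the waiting time until the next split is exponential
  with rate lambda*(k+2). omega k is that holding time; the holding times are independent.\<close>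

definition yule_space :: "real \<Rightarrow> (nat \<Rightarrow> real) measure" where
  "yule_space lam = (\<Pi>\<^sub>M k\<in>(UNIV::nat set). density lborel (exponential_density (lam * (real k + 2))))"

text \<open>Number of lineages at time s after the initial bifurcation: 2 plus the number of
  splits (the m-th split happens at time omega 0 + ... + omega (m-1)) that occurred by time s.\<close>

definition yule_count :: "(nat \<Rightarrow> real) \<Rightarrow> real \<Rightarrow> nat" where
  "yule_count \<omega> s = 2 + card {m::nat. 1 \<le> m \<and> (\<Sum>k<m. \<omega> k) \<le> s}"

text \<open>Total edge length of the tree observed at time t after the initial bifurcation:
  the integral over [0,t] of the number of lineages alive.\<close>

definition yule_length :: "real \<Rightarrow> (nat \<Rightarrow> real) \<Rightarrow> real" where
  "yule_length t \<omega> = integral {0..t} (\<lambda>s. real (yule_count \<omega> s))"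

definition yule_L :: "real \<Rightarrow> nat \<Rightarrow> real \<Rightarrow> real" where
  "yule_L lam n t =
     (let M = yule_space lam; A = {\<omega> \<in> space M. yule_count \<omega> t = n}
      in (\<integral>\<omega>. yule_length t \<omega> * indicator A \<omega> \<partial>M) / measure M A)"

definition yfun :: "real \<Rightarrow> real" where
  "yfun x = x * exp (- x) / (1 - exp (- x))"

end

theory Submission
  imports Defs "HOL-Real_Asymp.Real_Asymp"
begin


definition qf :: "real \<Rightarrow> real \<Rightarrow> real" where
  "qf lam v = (1 - exp (- (lam * v))) / lam"
definition Df :: "real \<Rightarrow> real \<Rightarrow> real" where
  "Df lam v = (qf lam v - v * exp (- (lam * v))) / lam"
definition Ff :: "real \<Rightarrow> nat \<Rightarrow> real \<Rightarrow> real" where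
  "Ff lam j v = (if j = 0 then 0 else qf lam v ^ (j - 1) * Df lam v / fact (j - 1))"

lemma qf_deriv: "lam \<noteq> 0 \<Longrightarrow> (qf lam has_real_derivative exp (- (lam * v))) (at v)"
  unfolding qf_def
  by (rule derivative_eq_intros refl | simp)+

lemma Df_deriv: "lam \<noteq> 0 \<Longrightarrow> (Df lam has_real_derivative v * exp (- (lam * v))) (at v)"
  unfolding Df_def
  apply (rule derivative_eq_intros qf_deriv refl | simp)+
  done

lemma QP_deriv: "lam \<noteq> 0 \<Longrightarrow>
  ((\<lambda>v. qf lam v ^ Suc j / fact (Suc j)) has_real_derivative
     exp (- (lam * v)) * (qf lam v ^ j / fact j)) (at v)"
  apply (rule derivative_eq_intros qf_deriv refl | simp)+
  done

lemma FF_deriv: assumes l: "lam \<noteq> 0" shows "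
  ((\<lambda>v. Ff lam (Suc j) v) has_real_derivative
     exp (- (lam * v)) * (Ff lam j v + v * (qf lam v ^ j / fact j))) (at v)"
proof (cases j)
  case 0
  then show ?thesis using Df_deriv[OF l, of v] by (simp add: Ff_def mult.commute)
next
  case (Suc i)
  have d: "((\<lambda>v. qf lam v ^ Suc i * Df lam v / fact (Suc i)) has_real_derivative
     ((real (Suc i) * exp (- (lam * v)) * qf lam v ^ i) * Df lam v + qf lam v ^ Suc i * (v * exp (- (lam * v)))) / fact (Suc i)) (at v)"
    by (rule DERIV_cong[OF DERIV_cdivide[OF DERIV_mult[OF DERIV_power[OF qf_deriv[OF l], where n="Suc i"] Df_deriv[OF l]], where c="fact (Suc i)"]])
      (simp add: algebra_simps)
  have e: "((real (Suc i) * exp (- (lam * v)) * qf lam v ^ i) * Df lam v + qf lam v ^ Suc i * (v * exp (- (lam * v)))) / fact (Suc i)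
     = exp (- (lam * v)) * (qf lam v ^ i * Df lam v / fact i + v * (qf lam v ^ Suc i / fact (Suc i)))"
  proof -
    have f: "(fact (Suc i) :: real) = real (Suc i) * fact i" by simp
    have p: "real (Suc i) > 0" "(fact i :: real) > 0" by auto
    have alg: "\<And>F k e Q D q v. (F::real) > 0 \<Longrightarrow> k > 0 \<Longrightarrow>
       (k * e * Q * D + q * Q * (v * e)) / (k * F) = e * (Q * D / F + v * (q * Q / (k * F)))"
      by (simp add: field_simps)
    show ?thesis unfolding f power_Suc using alg[OF p(2) p(1)] by simp
  qed
  have "((\<lambda>v. qf lam v ^ Suc i * Df lam v / fact (Suc i)) has_real_derivative
     exp (- (lam * v)) * (qf lam v ^ i * Df lam v / fact i + v * (qf lam v ^ Suc i / fact (Suc i)))) (at v)"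
    using d e by simp
  then show ?thesis using Suc by (simp add: Ff_def)
qed

lemma H_deriv:
  assumes "lam \<noteq> 0"
  shows "((\<lambda>v. \<alpha> * (qf lam v ^ Suc j / fact (Suc j)) + \<beta> * (Ff lam (Suc j) v + qf lam v ^ Suc j / fact (Suc j) * \<Sigma>))
     has_real_derivative exp (- (lam * v)) * (\<alpha> * (qf lam v ^ j / fact j) + \<beta> * (Ff lam j v + qf lam v ^ j / fact j * (v + \<Sigma>)))) (at v)"
proof -
  have a: "((\<lambda>v. \<alpha> * (qf lam v ^ Suc j / fact (Suc j))) has_real_derivative \<alpha> * (exp (- (lam * v)) * (qf lam v ^ j / fact j))) (at v)"
    by (rule DERIV_cmult[OF QP_deriv[OF assms]])
  have b: "((\<lambda>v. qf lam v ^ Suc j / fact (Suc j) * \<Sigma>) has_real_derivative (exp (- (lam * v)) * (qf lam v ^ j / fact j)) * \<Sigma>) (at v)"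
    by (rule DERIV_cmult_right[OF QP_deriv[OF assms]])
  have c: "((\<lambda>v. \<beta> * (Ff lam (Suc j) v + qf lam v ^ Suc j / fact (Suc j) * \<Sigma>)) has_real_derivative \<beta> * (exp (- (lam * v)) * (Ff lam j v + v * (qf lam v ^ j / fact j)) + (exp (- (lam * v)) * (qf lam v ^ j / fact j)) * \<Sigma>)) (at v)"
    by (rule DERIV_cmult[OF DERIV_add[OF FF_deriv[OF assms] b]])
  show ?thesis
    by (rule DERIV_cong[OF DERIV_add[OF a c]]) (simp add: field_simps)
qed

lemma qf_0[simp]: "qf lam 0 = 0" by (simp add: qf_def)
lemma Df_0[simp]: "Df lam 0 = 0" by (simp add: Df_def)
lemma Ff_0[simp]: "Ff lam j 0 = 0" by (simp add: Ff_def)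

lemma qf_nonneg: "lam > 0 \<Longrightarrow> v \<ge> 0 \<Longrightarrow> qf lam v \<ge> 0"
  by (simp add: qf_def)
lemma Df_nonneg: assumes "lam > 0" "v \<ge> 0" shows "Df lam v \<ge> 0"
proof -
  have "1 + lam * v \<le> exp (lam * v)" by (rule exp_ge_add_one_self)
  hence "1 + lam * v \<le> exp (lam * v)" .
  hence "(1 + lam * v) * exp (- (lam * v)) \<le> 1"
    by (metis exp_minus_inverse exp_gt_zero mult_right_mono less_imp_le)
  hence "lam * v * exp (- (lam * v)) \<le> 1 - exp (- (lam * v))" by (simp add: algebra_simps)
  thus ?thesis using assms by (simp add: Df_def qf_def field_simps)
qed
lemma Ff_nonneg: "lam > 0 \<Longrightarrow> v \<ge> 0 \<Longrightarrow> Ff lam j v \<ge> 0"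
  by (simp add: Ff_def qf_nonneg Df_nonneg)

lemma qf_meas[measurable]: "qf lam \<in> borel_measurable borel"
  unfolding qf_def by measurable
lemma Df_meas[measurable]: "Df lam \<in> borel_measurable borel"
  unfolding Df_def by measurable
lemma Ff_meas[measurable]: "Ff lam j \<in> borel_measurable borel"
  unfolding Ff_def by measurable




definition Sx :: "(nat \<Rightarrow> real) \<Rightarrow> nat \<Rightarrow> real" where
  "Sx x m = (\<Sum>k<m. x k)"

abbreviation MK :: "real \<Rightarrow> nat \<Rightarrow> real measure" where
  "MK lam k \<equiv> density lborel (\<lambda>x. ennreal (exponential_density (lam * (real k + 2)) x))"

lemma comp_meas[measurable]: "(\<lambda>x. x k) \<in> borel_measurable (PiM I (MK lam))"
proof (cases "k \<in> I")
  case True then show ?thesis by measurable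
next
  case False
  show ?thesis
    by (rule measurable_cong[where f="\<lambda>_. undefined", THEN iffD1])
       (auto simp: space_PiM PiE_arb[OF _ False])
qed

lemma Sx_meas[measurable]: "(\<lambda>x. Sx x m) \<in> borel_measurable (PiM I (MK lam))"
  unfolding Sx_def by measurable

definition Phi :: "real \<Rightarrow> real \<Rightarrow> real \<Rightarrow> nat \<Rightarrow> nat \<Rightarrow> real \<Rightarrow> (nat \<Rightarrow> real) \<Rightarrow> real" where
  "Phi lam \<alpha> \<beta> m j t x = exp (- (lam * (real m + 2) * (t - Sx x m))) *
     (\<alpha> * (qf lam (t - Sx x m) ^ j / fact j) +
      \<beta> * (Ff lam j (t - Sx x m) + qf lam (t - Sx x m) ^ j / fact j * (\<Sum>i\<in>{1..m}. t - Sx x i)))"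

definition Eset :: "nat \<Rightarrow> real \<Rightarrow> (nat \<Rightarrow> real) set" where
  "Eset m t = {x. (\<forall>k<m. 0 \<le> x k) \<and> Sx x m \<le> t}"

definition Cm :: "real \<Rightarrow> nat \<Rightarrow> real" where
  "Cm lam m = (\<Prod>k<m. lam * (real k + 2))"

lemma Phi_meas[measurable]: "Phi lam \<alpha> \<beta> m j t \<in> borel_measurable (PiM I (MK lam))"
  unfolding Phi_def by measurable

lemma Eset_meas[measurable]: "Eset m t \<inter> space (PiM I (MK lam)) \<in> sets (PiM I (MK lam))"
proof -
  have "Eset m t \<inter> space (PiM I (MK lam)) = {x \<in> space (PiM I (MK lam)). (\<forall>k. k < m \<longrightarrow> 0 \<le> x k) \<and> Sx x m \<le> t}"
    by (auto simp: Eset_def)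
  also have "\<dots> \<in> sets (PiM I (MK lam))" by measurable
  finally show ?thesis .
qed

lemma Eset_ind_meas[measurable]: "(\<lambda>x. indicator (Eset m t) x :: ennreal) \<in> borel_measurable (PiM I (MK lam))"
proof -
  have "{x \<in> space (PiM I (MK lam)). x \<in> Eset m t} \<in> sets (PiM I (MK lam))"
    using Eset_meas[of m t I lam] by (simp add: Int_def conj_commute)
  from borel_measurable_indicator'[OF this] show ?thesis by simp
qed




lemma Sx_upd_le: "i \<le> m \<Longrightarrow> Sx (x(m:=u)) i = Sx x i"
  unfolding Sx_def by (intro sum.cong) auto

lemma Sx_upd_Suc: "Sx (x(m:=u)) (Suc m) = Sx x m + u"
  unfolding Sx_def by (simp add: Sx_upd_le[unfolded Sx_def])

lemma Sx_mono: "(\<forall>k<m. 0 \<le> x k) \<Longrightarrow> i \<le> m \<Longrightarrow> Sx x i \<le> Sx x m"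
  unfolding Sx_def by (intro sum_mono2) auto

lemma Eset_upd: "(x(m:=u) \<in> Eset (Suc m) t) \<longleftrightarrow> (x \<in> Eset m t \<and> u \<in> {0..t - Sx x m})"
proof -
  have a: "(\<forall>k<Suc m. 0 \<le> (x(m:=u)) k) \<longleftrightarrow> (\<forall>k<m. 0 \<le> x k) \<and> 0 \<le> u"
    by (auto simp: less_Suc_eq)
  show ?thesis unfolding Eset_def mem_Collect_eq a Sx_upd_Suc by auto
qed

lemma Phi_upd:
  "Phi lam \<alpha> \<beta> (Suc m) j t (x(m:=u)) =
   exp (- ((lam * (real m + 2) + lam) * ((t - Sx x m) - u))) *
     (\<alpha> * (qf lam ((t - Sx x m) - u) ^ j / fact j) +
      \<beta> * (Ff lam j ((t - Sx x m) - u) + qf lam ((t - Sx x m) - u) ^ j / fact j *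
         ((\<Sum>i\<in>{1..m}. t - Sx x i) + ((t - Sx x m) - u))))"
proof -
  have s: "(\<Sum>i\<in>{1..Suc m}. t - Sx (x(m:=u)) i) = (\<Sum>i\<in>{1..m}. t - Sx x i) + ((t - Sx x m) - u)"
    by (simp add: Sx_upd_le Sx_upd_Suc)
  have e: "lam * (real (Suc m) + 2) = lam * (real m + 2) + lam" by (simp add: algebra_simps)
  show ?thesis unfolding Phi_def s e Sx_upd_Suc by (simp add: algebra_simps)
qed

lemma inner:
  assumes lam: "0 < lam" and ab: "0 \<le> \<alpha>" "0 \<le> \<beta>"
  shows "(\<integral>\<^sup>+u. ennreal (Phi lam \<alpha> \<beta> (Suc m) j t (x(m:=u))) * indicator (Eset (Suc m) t) (x(m:=u)) \<partial>MK lam m)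
     = ennreal (lam * (real m + 2)) * (ennreal (Phi lam \<alpha> \<beta> m (Suc j) t x) * indicator (Eset m t) x)"
proof -
  define c where "c = lam * (real m + 2)"
  define r where "r = t - Sx x m"
  define \<Sigma> where "\<Sigma> = (\<Sum>i\<in>{1..m}. t - Sx x i)"
  define P where "P u = exp (- ((c + lam) * (r - u))) *
     (\<alpha> * (qf lam (r - u) ^ j / fact j) + \<beta> * (Ff lam j (r - u) + qf lam (r - u) ^ j / fact j * (\<Sigma> + (r - u))))" for u
  define H where "H v = \<alpha> * (qf lam v ^ Suc j / fact (Suc j)) + \<beta> * (Ff lam (Suc j) v + qf lam v ^ Suc j / fact (Suc j) * \<Sigma>)" for v
  define h where "h v = exp (- (lam * v)) * (\<alpha> * (qf lam v ^ j / fact j) + \<beta> * (Ff lam j v + qf lam v ^ j / fact j * (v + \<Sigma>)))" for v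
  define g where "g u = c * exp (- (c * u)) * P u" for u
  have cpos: "c > 0" using lam by (simp add: c_def)
  have "(\<integral>\<^sup>+u. ennreal (Phi lam \<alpha> \<beta> (Suc m) j t (x(m:=u))) * indicator (Eset (Suc m) t) (x(m:=u)) \<partial>MK lam m)
      = (\<integral>\<^sup>+u. ennreal (P u) * indicator {0..r} u * indicator (Eset m t) x \<partial>MK lam m)"
    by (intro nn_integral_cong)
       (simp add: Phi_upd Eset_upd P_def c_def r_def \<Sigma>_def split: split_indicator)
  also have "\<dots> = ennreal (c * (exp (- (c * r)) * H r)) * indicator (Eset m t) x"
  proof (cases "x \<in> Eset m t")
    case False then show ?thesis by simp
  next
    case True
    then have xnn: "\<forall>k<m. 0 \<le> x k" and r0: "0 \<le> r" by (auto simp: Eset_def r_def)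
    have le: "\<forall>i\<le>m. Sx x i \<le> t" using Sx_mono[OF xnn] True by (force simp: Eset_def)
    have \<Sigma>0: "0 \<le> \<Sigma>" unfolding \<Sigma>_def
      using le by (intro sum_nonneg) auto
    have Pnn: "0 \<le> P u" if "u \<in> {0..r}" for u
      using that ab lam \<Sigma>0 unfolding P_def
      by (auto intro!: mult_nonneg_nonneg add_nonneg_nonneg zero_le_power qf_nonneg Ff_nonneg divide_nonneg_pos)
    have "(\<integral>\<^sup>+u. ennreal (P u) * indicator {0..r} u * indicator (Eset m t) x \<partial>MK lam m)
        = (\<integral>\<^sup>+u. ennreal (P u) * indicator {0..r} u \<partial>MK lam m)"
      using True by simp
    also have "\<dots> = (\<integral>\<^sup>+u. ennreal (exponential_density c u) * (ennreal (P u) * indicator {0..r} u) \<partial>lborel)"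
      unfolding c_def[symmetric]
      by (rule nn_integral_density) (auto simp: P_def)
    also have "\<dots> = (\<integral>\<^sup>+u. ennreal (g u) * indicator {0..r} u \<partial>lborel)"
    proof (intro nn_integral_cong)
      fix u :: real
      show "ennreal (exponential_density c u) * (ennreal (P u) * indicator {0..r} u) = ennreal (g u) * indicator {0..r} u"
      proof (cases "u \<in> {0..r}")
        case True
        have "ennreal (exponential_density c u) * ennreal (P u) = ennreal (g u)"
          using True Pnn[OF True] cpos
          by (subst ennreal_mult[symmetric]) (auto simp: g_def exponential_density_def mult_ac)
        then show ?thesis using True by (simp add: mult.assoc[symmetric])
      qed simp
    qed
    also have "\<dots> = ennreal ((- (c * exp (- (c * r)) * H (r - r))) - (- (c * exp (- (c * r)) * H (r - 0))))"
    proof (rule nn_integral_FTC_Icc)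
      show "g \<in> borel_measurable borel" unfolding g_def P_def by measurable
      show "0 \<le> g u" if "u \<in> {0..r}" for u using that Pnn cpos by (simp add: g_def)
      show "0 \<le> r" by fact
      show "((\<lambda>u. - (c * exp (- (c * r)) * H (r - u))) has_real_derivative g u) (at u)" if "u \<in> {0..r}" for u
      proof -
        have d1: "(H has_real_derivative h (r - u)) (at (r - u))"
          unfolding H_def h_def using lam by (intro H_deriv) simp
        have d2: "((\<lambda>u. r - u) has_real_derivative -1) (at u)"
          by (rule derivative_eq_intros refl | simp)+
        have d: "((\<lambda>u. - (c * exp (- (c * r)) * H (r - u))) has_real_derivative - (c * exp (- (c * r)) * (h (r - u) * -1))) (at u)"
          by (intro DERIV_minus DERIV_cmult DERIV_chain2[OF d1 d2])
        have ex: "exp (- (c * u)) * exp (- ((c + lam) * (r - u))) = exp (- (c * r)) * exp (- (lam * (r - u)))"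
          by (simp add: exp_add[symmetric] algebra_simps)
        define B where "B = \<alpha> * (qf lam (r - u) ^ j / fact j) + \<beta> * (Ff lam j (r - u) + qf lam (r - u) ^ j / fact j * (\<Sigma> + (r - u)))"
        have g1: "g u = c * (exp (- (c * u)) * exp (- ((c + lam) * (r - u)))) * B"
          unfolding g_def P_def B_def by (simp only: mult_ac)
        have g2: "- (c * exp (- (c * r)) * (h (r - u) * -1)) = c * (exp (- (c * r)) * exp (- (lam * (r - u)))) * B"
          unfolding h_def B_def by (simp add: add.commute mult_ac)
        have "- (c * exp (- (c * r)) * (h (r - u) * -1)) = g u"
          unfolding g1 g2 ex ..
        with d show ?thesis by simp
      qed
    qed
    also have "\<dots> = ennreal (c * (exp (- (c * r)) * H r)) * indicator (Eset m t) x"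
      using True by (simp add: H_def algebra_simps)
    finally show ?thesis .
  qed
  also have "\<dots> = ennreal (lam * (real m + 2)) * (ennreal (Phi lam \<alpha> \<beta> m (Suc j) t x) * indicator (Eset m t) x)"
  proof -
    have "c * (exp (- (c * r)) * H r) = c * Phi lam \<alpha> \<beta> m (Suc j) t x"
      by (simp add: Phi_def H_def c_def r_def \<Sigma>_def)
    then show ?thesis using cpos by (simp add: ennreal_mult' c_def[symmetric] mult.assoc)
  qed
  finally show ?thesis .
qed




lemma PPS: "0 < lam \<Longrightarrow> product_prob_space (MK lam)"
  by (auto simp: product_prob_space_def product_prob_space_axioms_def product_sigma_finite_def
      prob_space_exponential_density prob_space_imp_sigma_finite)

lemma mainL:
  assumes lam: "0 < lam" and ab: "0 \<le> \<alpha>" "0 \<le> \<beta>"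
  shows "(\<integral>\<^sup>+x. ennreal (Phi lam \<alpha> \<beta> m j t x) * indicator (Eset m t) x \<partial>PiM {..<m} (MK lam))
    = ennreal (Cm lam m * exp (- (2 * lam * t)) * (\<alpha> * (qf lam t ^ (j + m) / fact (j + m)) + \<beta> * Ff lam (j + m) t))
      * indicator {0..} t"
proof (induction m arbitrary: j t)
  case 0
  show ?case
    by (simp add: PiM_empty nn_integral_count_space_finite Phi_def Eset_def Sx_def Cm_def mult_ac
        split: split_indicator)
next
  case (Suc m)
  interpret PS: product_prob_space "MK lam" "UNIV :: nat set" using PPS[OF lam] .
  have ins: "{..<Suc m} = insert m {..<m}" by auto
  have "(\<integral>\<^sup>+x. ennreal (Phi lam \<alpha> \<beta> (Suc m) j t x) * indicator (Eset (Suc m) t) x \<partial>PiM {..<Suc m} (MK lam))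
     = (\<integral>\<^sup>+x. \<integral>\<^sup>+u. ennreal (Phi lam \<alpha> \<beta> (Suc m) j t (x(m:=u))) * indicator (Eset (Suc m) t) (x(m:=u)) \<partial>MK lam m \<partial>PiM {..<m} (MK lam))"
    unfolding ins by (rule PS.product_nn_integral_insert) auto
  also have "\<dots> = (\<integral>\<^sup>+x. ennreal (lam * (real m + 2)) * (ennreal (Phi lam \<alpha> \<beta> m (Suc j) t x) * indicator (Eset m t) x) \<partial>PiM {..<m} (MK lam))"
    by (intro nn_integral_cong inner[OF lam ab])
  also have "\<dots> = ennreal (lam * (real m + 2)) * (\<integral>\<^sup>+x. ennreal (Phi lam \<alpha> \<beta> m (Suc j) t x) * indicator (Eset m t) x \<partial>PiM {..<m} (MK lam))"
    by (rule nn_integral_cmult) auto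
  also have "\<dots> = ennreal (lam * (real m + 2)) * (ennreal (Cm lam m * exp (- (2 * lam * t)) * (\<alpha> * (qf lam t ^ (Suc j + m) / fact (Suc j + m)) + \<beta> * Ff lam (Suc j + m) t))
      * indicator {0..} t)"
    by (simp only: Suc.IH)
  also have "\<dots> = ennreal (Cm lam (Suc m) * exp (- (2 * lam * t)) * (\<alpha> * (qf lam t ^ (j + Suc m) / fact (j + Suc m)) + \<beta> * Ff lam (j + Suc m) t))
      * indicator {0..} t"
    using lam by (simp add: ennreal_mult'[symmetric] Cm_def mult_ac)
  finally show ?case .
qed




lemma henstock_eq_lborel:
  fixes g :: "real \<Rightarrow> real"
  assumes meas: "(\<lambda>s. g s * indicator {a..b} s) \<in> borel_measurable borel"
    and nn: "\<And>s. s \<in> {a..b} \<Longrightarrow> 0 \<le> g s"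
  shows "integral {a..b} g = (\<integral>s. g s * indicator {a..b} s \<partial>lborel)"
proof (cases "integrable lborel (\<lambda>s. g s * indicator {a..b} s)")
  case True
  have eq: "(\<lambda>s. g s * indicator {a..b} s) = (\<lambda>s. if s \<in> {a..b} then g s else 0)"
    by (auto simp: indicator_def fun_eq_iff)
  from has_integral_integral_lborel[OF True] have "(g has_integral (\<integral>s. g s * indicator {a..b} s \<partial>lborel)) {a..b}"
    unfolding eq has_integral_restrict_UNIV by (simp add: eq)
  then show ?thesis by (rule integral_unique)
next
  case False
  have "\<not> g integrable_on {a..b}"
  proof
    assume "g integrable_on {a..b}"
    then have "g absolutely_integrable_on {a..b}"
      by (rule nonnegative_absolutely_integrable_1) (use nn in auto)
    then have "integrable lebesgue (\<lambda>s. indicator {a..b} s *\<^sub>R g s)"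
      by (simp add: set_integrable_def)
    moreover have "(\<lambda>s. indicator {a..b} s *\<^sub>R g s) \<in> borel_measurable lborel"
      using meas by (simp add: mult.commute)
    ultimately have "integrable lborel (\<lambda>s. indicator {a..b} s *\<^sub>R g s)"
      using integrable_completion by blast
    with False show False by (simp add: mult.commute)
  qed
  then show ?thesis using False by (simp add: not_integrable_integral not_integrable_integral_eq)
qed




lemma card_meas:
  fixes P :: "nat \<Rightarrow> 'a \<Rightarrow> bool"
  assumes "\<And>m. {x \<in> space N. P m x} \<in> sets N"
  shows "(\<lambda>x. real (card {m. P m x})) \<in> borel_measurable N"
proof -
  have [measurable]: "P m \<in> measurable N (count_space UNIV)" for m by (rule pred_def[THEN iffD2, OF assms])
  define h where "h K x = (if (\<exists>k. \<forall>n. P n x \<longrightarrow> n < k) then (\<Sum>m<K. if P m x then 1 else 0 :: real) else 0)" for K x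
  have hm: "h K \<in> borel_measurable N" for K
    unfolding h_def by measurable
  have fin: "finite {m. P m x} \<longleftrightarrow> (\<exists>k. \<forall>n. P n x \<longrightarrow> n < k)" for x
    by (simp add: finite_nat_set_iff_bounded)
  show ?thesis
  proof (rule borel_measurable_LIMSEQ_real[OF _ hm])
    fix x assume "x \<in> space N"
    show "(\<lambda>K. h K x) \<longlonglongrightarrow> real (card {m. P m x})"
    proof (cases "finite {m. P m x}")
      case False
      then have nb: "\<not> (\<exists>k. \<forall>n. P n x \<longrightarrow> n < k)" using fin[of x] by blast
      have "h K x = 0" for K unfolding h_def by (rule if_not_P[OF nb])
      then show ?thesis using False by simp
    next
      case True
      then obtain k where k: "\<forall>n. P n x \<longrightarrow> n < k" using fin by blast
      have "h K x = real (card {m. P m x})" if "K \<ge> k" for K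
      proof -
        have "(\<Sum>m<K. if P m x then 1 else 0 :: real) = real (card {m\<in>{..<K}. P m x})"
          by (simp add: sum.If_cases Int_def)
        also have "{m\<in>{..<K}. P m x} = {m. P m x}" using k that by auto
        finally show ?thesis using k by (auto simp: h_def)
      qed
      then show ?thesis
        by (intro tendsto_eventually) (auto simp: eventually_sequentially)
    qed
  qed
qed




lemma yule_count_Sx: "yule_count \<omega> s = 2 + card {m. 1 \<le> m \<and> Sx \<omega> m \<le> s}"
  by (simp add: yule_count_def Sx_def)

lemma count_joint_meas:
  "(\<lambda>p. real (yule_count (fst p) (snd p))) \<in> borel_measurable (PiM I (MK lam) \<Otimes>\<^sub>M lborel)"
proof -
  have "(\<lambda>p. real (card {m. 1 \<le> m \<and> Sx (fst p) m \<le> snd p})) \<in> borel_measurable (PiM I (MK lam) \<Otimes>\<^sub>M lborel)"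
    by (rule card_meas) measurable
  then show ?thesis by (simp add: yule_count_Sx)
qed

lemma count_meas_s: "(\<lambda>s. real (yule_count \<omega> s)) \<in> borel_measurable borel"
proof -
  have "(\<lambda>s. real (card {m. 1 \<le> m \<and> Sx \<omega> m \<le> s})) \<in> borel_measurable borel"
    by (rule card_meas) measurable
  then show ?thesis by (simp add: yule_count_Sx)
qed

lemma length_eq: "yule_length t \<omega> = (\<integral>s. real (yule_count \<omega> s) * indicator {0..t} s \<partial>lborel)"
  unfolding yule_length_def
  by (rule henstock_eq_lborel) (auto intro!: borel_measurable_times count_meas_s)

lemma length_nonneg: "0 \<le> yule_length t \<omega>"
  unfolding length_eq by (rule integral_nonneg_AE) auto

lemma length_meas: "(\<lambda>\<omega>. yule_length t \<omega>) \<in> borel_measurable (PiM I (MK lam))"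
proof -
  have "(\<lambda>p. real (yule_count (fst p) (snd p)) * indicator {0..t} (snd p)) \<in> borel_measurable (PiM I (MK lam) \<Otimes>\<^sub>M lborel)"
    using count_joint_meas by measurable
  then have "(\<lambda>\<omega>. \<integral>s. real (yule_count \<omega> s) * indicator {0..t} s \<partial>lborel) \<in> borel_measurable (PiM I (MK lam))"
    by (intro lborel.borel_measurable_lebesgue_integral) (simp add: case_prod_beta')
  then show ?thesis unfolding length_eq .
qed

lemma count_meas: "(\<lambda>\<omega>. real (yule_count \<omega> t)) \<in> borel_measurable (PiM I (MK lam))"
proof -
  have "(\<lambda>\<omega>. (\<omega>, t)) \<in> measurable (PiM I (MK lam)) (PiM I (MK lam) \<Otimes>\<^sub>M lborel)" by measurable
  from measurable_compose[OF this count_joint_meas] show ?thesis by simp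
qed




lemma restrict_reduce:
  assumes lam: "0 < lam" and f: "f \<in> borel_measurable (PiM {..<N} (MK lam))"
  shows "(\<integral>\<^sup>+\<omega>. f (restrict \<omega> {..<N}) \<partial>PiM UNIV (MK lam)) = (\<integral>\<^sup>+x. f x \<partial>PiM {..<N} (MK lam))"
proof -
  interpret PS: product_prob_space "MK lam" "UNIV::nat set" using PPS[OF lam] .
  have "(\<integral>\<^sup>+x. f x \<partial>PiM {..<N} (MK lam)) = (\<integral>\<^sup>+x. f x \<partial>distr (PiM UNIV (MK lam)) (PiM {..<N} (MK lam)) (\<lambda>x. restrict x {..<N}))"
    by (simp add: PS.distr_PiM_restrict_finite)
  also have "\<dots> = (\<integral>\<^sup>+\<omega>. f (restrict \<omega> {..<N}) \<partial>PiM UNIV (MK lam))"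
    by (rule nn_integral_distr) (auto intro: measurable_restrict_subset f)
  finally show ?thesis by simp
qed

lemma Sx_restrict: "m \<le> N \<Longrightarrow> Sx (restrict \<omega> {..<N}) m = Sx \<omega> m"
  unfolding Sx_def by (intro sum.cong) auto

definition Bset :: "nat \<Rightarrow> real \<Rightarrow> (nat \<Rightarrow> real) set" where
  "Bset m t = {x. (\<forall>k<Suc m. 0 \<le> x k) \<and> Sx x m \<le> t \<and> t < Sx x (Suc m)}"

lemma Bset_meas[measurable]: "Bset m t \<inter> space (PiM I (MK lam)) \<in> sets (PiM I (MK lam))"
proof -
  have "Bset m t \<inter> space (PiM I (MK lam)) = {x \<in> space (PiM I (MK lam)). (\<forall>k. k < Suc m \<longrightarrow> 0 \<le> x k) \<and> Sx x m \<le> t \<and> t < Sx x (Suc m)}"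
    by (auto simp: Bset_def)
  also have "\<dots> \<in> sets (PiM I (MK lam))" by measurable
  finally show ?thesis .
qed

lemma Bset_ind_meas[measurable]: "(\<lambda>x. indicator (Bset m t) x :: ennreal) \<in> borel_measurable (PiM I (MK lam))"
proof -
  have "{x \<in> space (PiM I (MK lam)). x \<in> Bset m t} \<in> sets (PiM I (MK lam))"
    using Bset_meas[of m t I lam] by (simp add: Int_def conj_commute)
  from borel_measurable_indicator'[OF this] show ?thesis by simp
qed

lemma Bset_restrict: "indicator (Bset m t) (restrict \<omega> {..<Suc m}) = (indicator (Bset m t) \<omega> :: 'a::zero_neq_one)"
proof -
  have "restrict \<omega> {..<Suc m} \<in> Bset m t \<longleftrightarrow> \<omega> \<in> Bset m t"
    unfolding Bset_def by (simp add: Sx_restrict)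
  then show ?thesis by (simp add: indicator_def)
qed

lemma Bset_upd: "x(m:=u) \<in> Bset m t \<longleftrightarrow> x \<in> Eset m t \<and> u \<in> {t - Sx x m<..}"
proof -
  have a: "(\<forall>k<Suc m. 0 \<le> (x(m:=u)) k) \<longleftrightarrow> (\<forall>k<m. 0 \<le> x k) \<and> 0 \<le> u"
    by (auto simp: less_Suc_eq)
  show ?thesis unfolding Bset_def Eset_def mem_Collect_eq a Sx_upd_Suc Sx_upd_le[OF order_refl]
    by auto
qed

lemma exp_tail:
  assumes l: "0 < l" and r: "0 \<le> r"
  shows "emeasure (density lborel (\<lambda>x. ennreal (exponential_density l x))) {r<..} = ennreal (exp (- r * l))"
proof -
  let ?M = "density lborel (\<lambda>x. ennreal (exponential_density l x))"
  interpret prob_space ?M using prob_space_exponential_density[OF l] .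
  have D: "distributed ?M lborel (\<lambda>x. x) (exponential_density l)"
    unfolding distributed_def by (auto simp: distr_id2)
  have "prob {x \<in> space ?M. r < x} = exp (- r * l)"
    by (rule exponential_distributedD_gt[OF D r l])
  moreover have "{x \<in> space ?M. r < x} = {r<..}" by auto
  ultimately show ?thesis by (simp add: emeasure_eq_measure)
qed




lemma Bint:
  assumes lam: "0 < lam" and ab: "0 \<le> \<alpha>" "0 \<le> \<beta>"
  shows "(\<integral>\<^sup>+x. ennreal (\<alpha> + \<beta> * (\<Sum>i\<in>{1..m}. t - Sx x i)) * indicator (Bset m t) x \<partial>PiM {..<Suc m} (MK lam))
    = ennreal (Cm lam m * exp (- (2 * lam * t)) * (\<alpha> * (qf lam t ^ m / fact m) + \<beta> * Ff lam m t)) * indicator {0..} t"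
proof -
  interpret PS: product_prob_space "MK lam" "UNIV :: nat set" using PPS[OF lam] .
  define \<psi> where "\<psi> x = \<alpha> + \<beta> * (\<Sum>i\<in>{1..m}. t - Sx x i)" for x
  have [measurable]: "\<psi> \<in> borel_measurable (PiM I (MK lam))" for I unfolding \<psi>_def by measurable
  have ins: "{..<Suc m} = insert m {..<m}" by auto
  have "(\<integral>\<^sup>+x. ennreal (\<psi> x) * indicator (Bset m t) x \<partial>PiM {..<Suc m} (MK lam))
     = (\<integral>\<^sup>+x. \<integral>\<^sup>+u. ennreal (\<psi> (x(m:=u))) * indicator (Bset m t) (x(m:=u)) \<partial>MK lam m \<partial>PiM {..<m} (MK lam))"
    unfolding ins by (rule PS.product_nn_integral_insert) auto
  also have "\<dots> = (\<integral>\<^sup>+x. ennreal (Phi lam \<alpha> \<beta> m 0 t x) * indicator (Eset m t) x \<partial>PiM {..<m} (MK lam))"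
  proof (intro nn_integral_cong)
    fix x :: "nat \<Rightarrow> real"
    define r where "r = t - Sx x m"
    have \<psi>u: "\<psi> (x(m:=u)) = \<psi> x" for u
      unfolding \<psi>_def by (intro arg_cong2[where f="(+)"] refl arg_cong2[where f="(*)"] sum.cong) (auto simp: Sx_upd_le)
    have "(\<integral>\<^sup>+u. ennreal (\<psi> (x(m:=u))) * indicator (Bset m t) (x(m:=u)) \<partial>MK lam m)
        = (\<integral>\<^sup>+u. (ennreal (\<psi> x) * indicator (Eset m t) x) * indicator {r<..} u \<partial>MK lam m)"
      by (intro nn_integral_cong) (simp add: \<psi>u Bset_upd r_def split: split_indicator)
    also have "\<dots> = (ennreal (\<psi> x) * indicator (Eset m t) x) * emeasure (MK lam m) {r<..}"
      by (subst nn_integral_cmult) auto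
    also have "\<dots> = ennreal (Phi lam \<alpha> \<beta> m 0 t x) * indicator (Eset m t) x"
    proof (cases "x \<in> Eset m t")
      case False then show ?thesis by simp
    next
      case True
      then have xnn: "\<forall>k<m. 0 \<le> x k" and r0: "0 \<le> r" by (auto simp: Eset_def r_def)
      have le: "\<forall>i\<le>m. Sx x i \<le> t" using Sx_mono[OF xnn] True by (force simp: Eset_def)
      have "0 \<le> (\<Sum>i\<in>{1..m}. t - Sx x i)" using le by (intro sum_nonneg) auto
      then have \<psi>0: "0 \<le> \<psi> x" unfolding \<psi>_def using ab by simp
      have c: "0 < lam * (real m + 2)" using lam by simp
      have "(ennreal (\<psi> x) * indicator (Eset m t) x) * emeasure (MK lam m) {r<..} = ennreal (\<psi> x) * ennreal (exp (- r * (lam * (real m + 2))))"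
        using True exp_tail[OF c r0] by simp
      also have "\<dots> = ennreal (Phi lam \<alpha> \<beta> m 0 t x)"
      proof -
        have eq: "Phi lam \<alpha> \<beta> m 0 t x = \<psi> x * exp (- r * (lam * (real m + 2)))"
          unfolding Phi_def \<psi>_def r_def Ff_def by (simp add: algebra_simps)
        show ?thesis unfolding eq using \<psi>0 by (simp add: ennreal_mult)
      qed
      finally show ?thesis using True by simp
    qed
    finally show "(\<integral>\<^sup>+u. ennreal (\<psi> (x(m:=u))) * indicator (Bset m t) (x(m:=u)) \<partial>MK lam m) = ennreal (Phi lam \<alpha> \<beta> m 0 t x) * indicator (Eset m t) x" .
  qed
  also have "\<dots> = ennreal (Cm lam m * exp (- (2 * lam * t)) * (\<alpha> * (qf lam t ^ (0 + m) / fact (0 + m)) + \<beta> * Ff lam (0 + m) t)) * indicator {0..} t"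
    by (rule mainL[OF lam ab])
  finally show ?thesis by (simp add: \<psi>_def)
qed




lemma space_Y: "space (PiM UNIV (MK lam)) = UNIV"
  by (simp add: space_PiM PiE_UNIV_domain)

lemma BsetY: "{\<omega> \<in> space (PiM UNIV (MK lam)). \<omega> \<in> Bset m t} \<in> sets (PiM UNIV (MK lam))"
proof -
  have "{\<omega> \<in> space (PiM UNIV (MK lam)). \<omega> \<in> Bset m t} = Bset m t \<inter> space (PiM UNIV (MK lam))" by blast
  then show ?thesis using Bset_meas[of m t UNIV lam] by simp
qed

lemma Bset_restrict_mem: "restrict \<omega> {..<Suc m} \<in> Bset m t \<longleftrightarrow> \<omega> \<in> Bset m t"
  unfolding Bset_def by (simp add: Sx_restrict)

lemma emeasure_B:
  assumes lam: "0 < lam" and t: "0 \<le> t"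
  shows "emeasure (PiM UNIV (MK lam)) {\<omega> \<in> space (PiM UNIV (MK lam)). \<omega> \<in> Bset m t}
     = ennreal (Cm lam m * exp (- (2 * lam * t)) * (qf lam t ^ m / fact m))"
proof -
  let ?Y = "PiM UNIV (MK lam)"
  have "emeasure ?Y {\<omega> \<in> space ?Y. \<omega> \<in> Bset m t} = (\<integral>\<^sup>+\<omega>. indicator {\<omega> \<in> space ?Y. \<omega> \<in> Bset m t} \<omega> \<partial>?Y)"
    by (rule nn_integral_indicator[symmetric]) (rule BsetY)
  also have "\<dots> = (\<integral>\<^sup>+\<omega>. indicator (Bset m t) (restrict \<omega> {..<Suc m}) \<partial>?Y)"
    by (intro nn_integral_cong) (simp add: Bset_restrict_mem indicator_def space_Y)
  also have "\<dots> = (\<integral>\<^sup>+x. indicator (Bset m t) x \<partial>PiM {..<Suc m} (MK lam))"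
    by (rule restrict_reduce[OF lam]) measurable
  also have "\<dots> = (\<integral>\<^sup>+x. ennreal (1 + 0 * (\<Sum>i\<in>{1..m}. t - Sx x i)) * indicator (Bset m t) x \<partial>PiM {..<Suc m} (MK lam))"
    by simp
  also have "\<dots> = ennreal (Cm lam m * exp (- (2 * lam * t)) * (1 * (qf lam t ^ m / fact m) + 0 * Ff lam m t)) * indicator {0..} t"
    by (rule Bint[OF lam]) auto
  finally show ?thesis using t by simp
qed

lemma nnint_B:
  assumes lam: "0 < lam" and t: "0 \<le> t"
  shows "(\<integral>\<^sup>+\<omega>. ennreal (2 * t + (\<Sum>i\<in>{1..m}. t - Sx \<omega> i)) * indicator (Bset m t) \<omega> \<partial>PiM UNIV (MK lam))
     = ennreal (Cm lam m * exp (- (2 * lam * t)) * (2 * t * (qf lam t ^ m / fact m) + Ff lam m t))"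
proof -
  let ?Y = "PiM UNIV (MK lam)"
  have "(\<integral>\<^sup>+\<omega>. ennreal (2 * t + (\<Sum>i\<in>{1..m}. t - Sx \<omega> i)) * indicator (Bset m t) \<omega> \<partial>?Y)
     = (\<integral>\<^sup>+\<omega>. (\<lambda>x. ennreal (2 * t + 1 * (\<Sum>i\<in>{1..m}. t - Sx x i)) * indicator (Bset m t) x) (restrict \<omega> {..<Suc m}) \<partial>?Y)"
  proof (intro nn_integral_cong)
    fix \<omega> :: "nat \<Rightarrow> real"
    have "(\<Sum>i\<in>{1..m}. t - Sx (restrict \<omega> {..<Suc m}) i) = (\<Sum>i\<in>{1..m}. t - Sx \<omega> i)"
      by (intro sum.cong) (auto simp: Sx_restrict)
    then show "ennreal (2 * t + (\<Sum>i\<in>{1..m}. t - Sx \<omega> i)) * indicator (Bset m t) \<omega> =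
      (\<lambda>x. ennreal (2 * t + 1 * (\<Sum>i\<in>{1..m}. t - Sx x i)) * indicator (Bset m t) x) (restrict \<omega> {..<Suc m})"
      by (simp add: Bset_restrict)
  qed
  also have "\<dots> = (\<integral>\<^sup>+x. ennreal (2 * t + 1 * (\<Sum>i\<in>{1..m}. t - Sx x i)) * indicator (Bset m t) x \<partial>PiM {..<Suc m} (MK lam))"
    by (rule restrict_reduce[OF lam]) measurable
  also have "\<dots> = ennreal (Cm lam m * exp (- (2 * lam * t)) * (2 * t * (qf lam t ^ m / fact m) + 1 * Ff lam m t)) * indicator {0..} t"
    by (rule Bint[OF lam]) (use t in auto)
  finally show ?thesis using t by simp
qed

lemma c1: "prod_emb UNIV (MK lam) {k} (PiE {k} (\<lambda>_. {..<0})) \<in> sets (PiM UNIV (MK lam))"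
  by (intro measurable_prod_emb sets_PiM_I_finite) auto

lemma c2: "{\<omega> \<in> space (PiM UNIV (MK lam)). \<not> 0 \<le> \<omega> k} = prod_emb UNIV (MK lam) {k} (PiE {k} (\<lambda>_. {..<0}))"
  by (auto simp: prod_emb_def space_Y)

lemma c3: "emeasure (MK lam k) {..<0} = 0"
proof -
  have "emeasure (MK lam k) {..<0} = (\<integral>\<^sup>+x. ennreal (exponential_density (lam * (real k + 2)) x) * indicator {..<0} x \<partial>lborel)"
    by (rule emeasure_density) auto
  also have "\<dots> = (\<integral>\<^sup>+(x::real). 0 \<partial>lborel)"
    by (rule nn_integral_cong) (auto simp: exponential_density_def indicator_def)
  finally show ?thesis by simp
qed

lemma AE_nonneg:
  assumes lam: "0 < lam"
  shows "AE \<omega> in PiM UNIV (MK lam). \<forall>k. 0 \<le> \<omega> k"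
proof -
  interpret PS: product_prob_space "MK lam" "UNIV :: nat set" using PPS[OF lam] .
  have "AE \<omega> in PiM UNIV (MK lam). 0 \<le> \<omega> k" for k
  proof -
    have "emeasure (PiM UNIV (MK lam)) (prod_emb UNIV (MK lam) {k} (PiE {k} (\<lambda>_. {..<0}))) = (\<Prod>i\<in>{k}. emeasure (MK lam i) {..<0})"
      by (rule PS.emeasure_PiM_emb) auto
    also have "\<dots> = 0" using c3 by simp
    finally have "emeasure (PiM UNIV (MK lam)) (prod_emb UNIV (MK lam) {k} (PiE {k} (\<lambda>_. {..<0}))) = 0" .
    then show ?thesis using AE_iff_measurable[OF c1 c2] by blast
  qed
  then show ?thesis by (simp add: AE_all_countable)
qed

lemma Cm_closed: "Cm lam m = lam ^ m * fact (Suc m)"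
  by (induction m) (auto simp: Cm_def algebra_simps)

lemma a_sums:
  assumes lam: "0 < lam" and t: "0 \<le> t"
  shows "(\<lambda>m. Cm lam m * exp (- (2 * lam * t)) * (qf lam t ^ m / fact m)) sums 1"
proof -
  define z where "z = 1 - exp (- (lam * t))"
  have z: "norm z < 1" using lam t by (auto simp: z_def)
  have eq: "Cm lam m * exp (- (2 * lam * t)) * (qf lam t ^ m / fact m) = exp (- (2 * lam * t)) * (of_nat (Suc m) * z ^ m)" for m
  proof -
    have "qf lam t ^ m = z ^ m / lam ^ m" by (simp add: qf_def z_def power_divide)
    then show ?thesis using lam
      by (simp add: Cm_closed z_def field_simps del: of_nat_Suc)
  qed
  have "(\<lambda>m. exp (- (2 * lam * t)) * (of_nat (Suc m) * z ^ m)) sums (exp (- (2 * lam * t)) * (1 / (1 - z)\<^sup>2))"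
    by (rule sums_mult[OF geometric_deriv_sums[OF z]])
  moreover have "exp (- (2 * lam * t)) * (1 / (1 - z)\<^sup>2) = 1"
  proof -
    have "(1 - z)\<^sup>2 = exp (- (2 * lam * t))"
      by (simp add: z_def power2_eq_square exp_add[symmetric])
    then show ?thesis by simp
  qed
  ultimately show ?thesis unfolding eq by simp
qed




lemma Bset_disj: "m < m' \<Longrightarrow> \<omega> \<in> Bset m t \<Longrightarrow> \<omega> \<in> Bset m' t \<Longrightarrow> False"
proof -
  assume mm: "m < m'" and B1: "\<omega> \<in> Bset m t" and B2: "\<omega> \<in> Bset m' t"
  from B2 have nn: "\<forall>k<m'. 0 \<le> \<omega> k" and le: "Sx \<omega> m' \<le> t" by (auto simp: Bset_def)
  have "Sx \<omega> (Suc m) \<le> Sx \<omega> m'" using Sx_mono[OF nn] mm by simp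
  moreover from B1 have "t < Sx \<omega> (Suc m)" by (simp add: Bset_def)
  ultimately show False using le by simp
qed

lemma Bset_unique: "\<omega> \<in> Bset m t \<Longrightarrow> \<omega> \<in> Bset m' t \<Longrightarrow> m = m'"
  using Bset_disj[of m m' \<omega> t] Bset_disj[of m' m \<omega> t] by (cases m m' rule: linorder_cases) auto

lemma AE_cover:
  assumes lam: "0 < lam" and t: "0 \<le> t"
  shows "AE \<omega> in PiM UNIV (MK lam). \<exists>m. \<omega> \<in> Bset m t"
proof -
  let ?Y = "PiM UNIV (MK lam)"
  interpret PS: product_prob_space "MK lam" "UNIV :: nat set" using PPS[OF lam] .
  define A where "A m = {\<omega> \<in> space ?Y. \<omega> \<in> Bset m t}" for m
  define a where "a m = Cm lam m * exp (- (2 * lam * t)) * (qf lam t ^ m / fact m)" for m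
  have Aset: "A m \<in> sets ?Y" for m
    using Bset_meas[of m t UNIV lam] by (simp add: A_def Int_def conj_commute)
  have disj: "disjoint_family A"
    unfolding disjoint_family_on_def A_def using Bset_unique by blast
  have a0: "0 \<le> a m" for m
    using lam t by (simp add: a_def Cm_closed qf_nonneg)
  have "emeasure ?Y (\<Union>m. A m) = (\<Sum>m. emeasure ?Y (A m))"
    by (rule suminf_emeasure[symmetric]) (use Aset disj in auto)
  also have "\<dots> = (\<Sum>m. ennreal (a m))"
    unfolding A_def a_def by (simp add: emeasure_B[OF lam t])
  also have "\<dots> = ennreal 1"
    by (rule suminf_ennreal_eq[OF a0]) (use a_sums[OF lam t] in \<open>simp add: a_def\<close>)
  finally have "measure ?Y (\<Union>m. A m) = 1"
    by (simp add: PS.emeasure_eq_measure)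
  then have "AE \<omega> in ?Y. \<omega> \<in> (\<Union>m. A m)" by (rule PS.AE_prob_1)
  then show ?thesis by (auto simp: A_def)
qed

lemma count_B:
  assumes nn: "\<forall>k. 0 \<le> \<omega> k" and B: "\<omega> \<in> Bset m t" and s: "s \<le> t"
  shows "{j. 1 \<le> j \<and> Sx \<omega> j \<le> s} = {j\<in>{1..m}. Sx \<omega> j \<le> s}"
proof -
  have "j \<le> m" if "Sx \<omega> j \<le> s" for j
  proof (rule ccontr)
    assume "\<not> j \<le> m"
    then have "Sx \<omega> (Suc m) \<le> Sx \<omega> j" using Sx_mono[of j \<omega> "Suc m"] nn by simp
    moreover have "t < Sx \<omega> (Suc m)" using B by (simp add: Bset_def)
    ultimately show False using that s by simp
  qed
  then show ?thesis by auto
qed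

lemma count_t:
  assumes nn: "\<forall>k. 0 \<le> \<omega> k" and B: "\<omega> \<in> Bset m t"
  shows "yule_count \<omega> t = m + 2"
proof -
  have "{j\<in>{1..m}. Sx \<omega> j \<le> t} = {1..m}"
    using Sx_mono[of m \<omega>] nn B by (force simp: Bset_def)
  then show ?thesis using count_B[OF nn B order_refl] by (simp add: yule_count_Sx)
qed

lemma length_B:
  assumes nn: "\<forall>k. 0 \<le> \<omega> k" and B: "\<omega> \<in> Bset m t" and t: "0 \<le> t"
  shows "yule_length t \<omega> = 2 * t + (\<Sum>j\<in>{1..m}. t - Sx \<omega> j)"
proof -
  have S0: "0 \<le> Sx \<omega> j" for j using nn by (simp add: Sx_def sum_nonneg)
  have Sle: "Sx \<omega> j \<le> t" if "j \<le> m" for j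
    using Sx_mono[of m \<omega> j] nn B that by (force simp: Bset_def)
  have pt: "real (yule_count \<omega> s) * indicator {0..t} s = 2 * indicator {0..t} s + (\<Sum>j\<in>{1..m}. indicator {Sx \<omega> j..t} s)" for s
  proof (cases "s \<in> {0..t}")
    case True
    have "real (card {j\<in>{1..m}. Sx \<omega> j \<le> s}) = (\<Sum>j\<in>{1..m}. if Sx \<omega> j \<le> s then 1 else 0 :: real)"
      by (simp add: sum.If_cases Int_def)
    also have "\<dots> = (\<Sum>j\<in>{1..m}. indicator {Sx \<omega> j..t} s)"
      using True by (intro sum.cong) (auto simp: indicator_def)
    finally show ?thesis
      using True count_B[OF nn B, of s] by (simp add: yule_count_Sx)
  next
    case False
    have "indicator {Sx \<omega> j..t} s = (0::real)" for j
      using False S0[of j] by (auto simp: indicator_def)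
    then show ?thesis using False by simp
  qed
  have "yule_length t \<omega> = (\<integral>s. 2 * indicator {0..t} s + (\<Sum>j\<in>{1..m}. indicator {Sx \<omega> j..t} s) \<partial>lborel)"
    unfolding length_eq pt ..
  also have "\<dots> = 2 * (\<integral>s. indicator {0..t} s \<partial>lborel) + (\<Sum>j\<in>{1..m}. (\<integral>s. indicator {Sx \<omega> j..t} s \<partial>lborel))"
  proof -
    have i1: "integrable lborel (\<lambda>s. 2 * indicator {0..t} s :: real)"
      using t by (intro integrable_mult_right integrable_real_indicator) auto
    have i2: "integrable lborel (\<lambda>s. (\<Sum>j\<in>{1..m}. indicator {Sx \<omega> j..t} s) :: real)"
      by (rule Bochner_Integration.integrable_sum) (auto intro!: integrable_real_indicator emeasure_bounded_finite)
    have "(\<integral>s. (\<Sum>j\<in>{1..m}. indicator {Sx \<omega> j..t} s :: real) \<partial>lborel) = (\<Sum>j\<in>{1..m}. (\<integral>s. indicator {Sx \<omega> j..t} s \<partial>lborel))"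
      by (rule Bochner_Integration.integral_sum) (auto intro!: integrable_real_indicator emeasure_bounded_finite)
    moreover have "(\<integral>s. 2 * indicator {0..t} s + (\<Sum>j\<in>{1..m}. indicator {Sx \<omega> j..t} s) \<partial>lborel) =
        (\<integral>s. 2 * indicator {0..t} s \<partial>lborel) + (\<integral>s. (\<Sum>j\<in>{1..m}. indicator {Sx \<omega> j..t} s :: real) \<partial>lborel)"
      by (rule Bochner_Integration.integral_add[OF i1 i2])
    moreover have "(\<integral>s. 2 * indicator {0..t} s \<partial>lborel) = 2 * (\<integral>s. indicator {0..t} s \<partial>lborel :: real)"
      by (rule integral_mult_right_zero)
    ultimately show ?thesis by simp
  qed
  also have "\<dots> = 2 * t + (\<Sum>j\<in>{1..m}. t - Sx \<omega> j)"
    using t Sle by (auto intro!: sum.cong simp: measure_def)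
  finally show ?thesis .
qed




lemma exp_strict: "z \<noteq> 0 \<Longrightarrow> 1 + z < exp (z::real)"
proof -
  assume z: "z \<noteq> 0"
  show ?thesis
  proof (cases "1 + z / 2 \<ge> 0")
    case True
    have "(1 + z / 2)\<^sup>2 \<le> (exp (z / 2))\<^sup>2"
      using True exp_ge_add_one_self[of "z/2"] by (intro power_mono) auto
    also have "(exp (z / 2))\<^sup>2 = exp z" by (simp add: power2_eq_square exp_add[symmetric])
    finally have "(1 + z / 2)\<^sup>2 \<le> exp z" .
    moreover have "0 < z * z" using z by (auto simp: zero_less_mult_iff linorder_neq_iff)
    then have "1 + z < (1 + z / 2)\<^sup>2" by (simp add: power2_eq_square field_simps)
    ultimately show ?thesis by simp
  next
    case False
    then have "1 + z < 0" by simp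
    then show ?thesis using exp_gt_zero[of z] by linarith
  qed
qed

lemma DERIV_exp_minus': "((\<lambda>x. exp (- x)) has_real_derivative - exp (- x)) (at (x::real))"
  by (rule derivative_eq_intros refl | simp)+

lemma yfun_deriv:
  assumes x: "0 < x"
  shows "(yfun has_real_derivative exp (- x) * (1 - exp (- x) - x) / (1 - exp (- x))\<^sup>2) (at x)"
proof -
  have ne: "1 - exp (- x) \<noteq> 0" using x by simp
  have f: "((\<lambda>x. x * exp (- x)) has_real_derivative (exp (- x) - x * exp (- x))) (at x)"
    by (rule DERIV_cong[OF DERIV_mult[OF DERIV_ident DERIV_exp_minus']]) simp
  have g: "((\<lambda>x. 1 - exp (- x)) has_real_derivative exp (- x)) (at x)"
    by (rule DERIV_cong[OF DERIV_diff[OF DERIV_const DERIV_exp_minus']]) simp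
  have "((\<lambda>x. x * exp (- x) / (1 - exp (- x))) has_real_derivative
     ((exp (- x) - x * exp (- x)) * (1 - exp (- x)) - x * exp (- x) * exp (- x)) / ((1 - exp (- x)) * (1 - exp (- x)))) (at x)"
    by (rule DERIV_divide[OF f g ne])
  moreover have "((exp (- x) - x * exp (- x)) * (1 - exp (- x)) - x * exp (- x) * exp (- x)) / ((1 - exp (- x)) * (1 - exp (- x)))
     = exp (- x) * (1 - exp (- x) - x) / (1 - exp (- x))\<^sup>2"
    by (simp add: power2_eq_square algebra_simps)
  ultimately have "((\<lambda>x. x * exp (- x) / (1 - exp (- x))) has_real_derivative exp (- x) * (1 - exp (- x) - x) / (1 - exp (- x))\<^sup>2) (at x)"
    by simp
  then show ?thesis unfolding yfun_def[abs_def] .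
qed

lemma yfun_anti: "strict_antimono_on {0<..} yfun"
proof (rule monotone_onI)
  fix a b :: real assume ab: "a \<in> {0<..}" "b \<in> {0<..}" "a < b"
  show "yfun b < yfun a"
  proof (rule DERIV_neg_imp_decreasing[OF ab(3)])
    fix x assume x: "a \<le> x" "x \<le> b"
    then have x0: "0 < x" using ab by auto
    have "1 - x < exp (- x)" using exp_strict[of "-x"] x0 by simp
    then have b: "1 - exp (- x) - x < 0" by simp
    have c: "0 < (1 - exp (- x))\<^sup>2" using x0 by simp
    have "exp (- x) * (1 - exp (- x) - x) < 0" using b by (simp add: mult_pos_neg)
    then have "exp (- x) * (1 - exp (- x) - x) / (1 - exp (- x))\<^sup>2 < 0"
      using c by (rule divide_neg_pos)
    then show "\<exists>y. (yfun has_real_derivative y) (at x) \<and> y < 0"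
      using yfun_deriv[OF x0] by blast
  qed
qed

lemma yfun_lim0: "(yfun \<longlongrightarrow> 1) (at_right 0)"
  unfolding yfun_def[abs_def] by real_asymp

lemma yfun_limtop: "(yfun \<longlongrightarrow> 0) at_top"
  unfolding yfun_def[abs_def] by real_asymp




lemma final_arith:
  assumes lam: "0 < lam" and t: "0 < t"
  shows "(Cm lam m * exp (- (2 * lam * t)) * (2 * t * (qf lam t ^ m / fact m) + Ff lam m t)) /
         (Cm lam m * exp (- (2 * lam * t)) * (qf lam t ^ m / fact m))
       = 2 * t + real m / lam * (1 - yfun (lam * t))"
proof -
  define E where "E = exp (- (lam * t))"
  have E1: "E < 1" using lam t by (simp add: E_def)
  have q: "0 < qf lam t" using lam t by (simp add: qf_def)
  have C: "0 < Cm lam m * exp (- (2 * lam * t))" using lam by (simp add: Cm_closed)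
  have Q: "0 < qf lam t ^ m / fact m" using q by simp
  have step: "(Cm lam m * exp (- (2 * lam * t)) * (2 * t * (qf lam t ^ m / fact m) + Ff lam m t)) /
         (Cm lam m * exp (- (2 * lam * t)) * (qf lam t ^ m / fact m))
       = 2 * t + Ff lam m t / (qf lam t ^ m / fact m)"
  proof -
    have alg: "\<And>C Q F (t::real). C > 0 \<Longrightarrow> Q > 0 \<Longrightarrow> C * (2 * t * Q + F) / (C * Q) = 2 * t + F / Q"
      by (simp add: field_simps)
    show ?thesis by (rule alg[OF C Q])
  qed
  have "Ff lam m t / (qf lam t ^ m / fact m) = real m / lam * (1 - yfun (lam * t))"
  proof (cases m)
    case 0 then show ?thesis by (simp add: Ff_def)
  next
    case (Suc i)
    have f: "(fact (Suc i) :: real) = real (Suc i) * fact i" by simp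
    have "Ff lam m t / (qf lam t ^ m / fact m) = real (Suc i) * Df lam t / qf lam t"
      using q unfolding Suc Ff_def f by (simp add: field_simps)
    also have "\<dots> = real (Suc i) / lam * (1 - yfun (lam * t))"
    proof -
      have ne: "1 - E \<noteq> 0" using E1 by simp
      have h: "Df lam t / qf lam t = (1 - lam * t * E / (1 - E)) / lam"
        using lam ne unfolding Df_def qf_def E_def[symmetric] by (simp add: field_simps)
      have "real (Suc i) * Df lam t / qf lam t = real (Suc i) * (Df lam t / qf lam t)" by simp
      also have "\<dots> = real (Suc i) * ((1 - lam * t * E / (1 - E)) / lam)" by (simp only: h)
      also have "\<dots> = real (Suc i) / lam * (1 - yfun (lam * t))" by (simp add: yfun_def E_def)
      finally show ?thesis .
    qed
    finally show ?thesis using Suc by simp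
  qed
  then show ?thesis using step by simp
qed


theorem theorem2:
  fixes lam t :: real and n :: nat
  assumes "lam > 0" and "t > 0" and "n \<ge> 2"
  shows "yule_L lam n t = 2 * t + (real n - 2) / lam * (1 - yfun (lam * t))
         \<and> strict_antimono_on {0<..} yfun
         \<and> (yfun \<longlongrightarrow> 1) (at_right 0)
         \<and> (yfun \<longlongrightarrow> 0) at_top"
proof (intro conjI yfun_anti yfun_lim0 yfun_limtop)
  have lam: "0 < lam" and t: "0 < t" and t0: "0 \<le> t" using assms by auto
  define m where "m = n - 2"
  have nm: "n = m + 2" using assms(3) by (simp add: m_def)
  let ?Y = "PiM UNIV (MK lam)"
  interpret PS: product_prob_space "MK lam" "UNIV :: nat set" using PPS[OF lam] .
  have Y: "yule_space lam = ?Y" by (simp add: yule_space_def)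
  define A where "A = {\<omega> \<in> space ?Y. yule_count \<omega> t = n}"
  define L where "L = Cm lam m * exp (- (2 * lam * t)) * (2 * t * (qf lam t ^ m / fact m) + Ff lam m t)"
  define P where "P = Cm lam m * exp (- (2 * lam * t)) * (qf lam t ^ m / fact m)"
  have good: "AE \<omega> in ?Y. (\<forall>k. 0 \<le> \<omega> k) \<and> (\<exists>m'. \<omega> \<in> Bset m' t)"
    using AE_nonneg[OF lam] AE_cover[OF lam t0] by eventually_elim auto
  have iff: "yule_count \<omega> t = n \<longleftrightarrow> \<omega> \<in> Bset m t"
    if "(\<forall>k. 0 \<le> \<omega> k) \<and> (\<exists>m'. \<omega> \<in> Bset m' t)" for \<omega>
  proof -
    from that obtain m' where nn: "\<forall>k. 0 \<le> \<omega> k" and B: "\<omega> \<in> Bset m' t" by blast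
    have c: "yule_count \<omega> t = m' + 2" by (rule count_t[OF nn B])
    show ?thesis
    proof
      assume "yule_count \<omega> t = n"
      then have "m' = m" using c nm by simp
      then show "\<omega> \<in> Bset m t" using B by simp
    next
      assume "\<omega> \<in> Bset m t"
      then have "m = m'" using Bset_unique B by blast
      then show "yule_count \<omega> t = n" using c nm by simp
    qed
  qed
  have cm[measurable]: "(\<lambda>\<omega>. real (yule_count \<omega> t)) \<in> borel_measurable ?Y" by (rule count_meas)
  have Aset: "A \<in> sets ?Y"
  proof -
    have "A = {\<omega> \<in> space ?Y. real (yule_count \<omega> t) = real n}" by (simp add: A_def)
    also have "\<dots> \<in> sets ?Y" by measurable
    finally show ?thesis .
  qed
  have lm[measurable]: "(\<lambda>\<omega>. yule_length t \<omega>) \<in> borel_measurable ?Y" by (rule length_meas)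
  have "emeasure ?Y A = emeasure ?Y {\<omega> \<in> space ?Y. \<omega> \<in> Bset m t}"
  proof (rule emeasure_eq_AE)
    show "AE \<omega> in ?Y. (\<omega> \<in> A) = (\<omega> \<in> {\<omega> \<in> space ?Y. \<omega> \<in> Bset m t})"
      using good by eventually_elim (auto simp: A_def iff space_Y)
  qed (use Aset BsetY in auto)
  also have "\<dots> = ennreal P" unfolding P_def by (rule emeasure_B[OF lam t0])
  finally have mA: "measure ?Y A = P"
    using lam by (simp add: measure_def P_def Cm_closed qf_nonneg[OF lam t0])
  have "(\<integral>\<^sup>+\<omega>. ennreal (yule_length t \<omega> * indicator A \<omega>) \<partial>?Y)
      = (\<integral>\<^sup>+\<omega>. ennreal (2 * t + (\<Sum>i\<in>{1..m}. t - Sx \<omega> i)) * indicator (Bset m t) \<omega> \<partial>?Y)"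
  proof (rule nn_integral_cong_AE)
    show "AE \<omega> in ?Y. ennreal (yule_length t \<omega> * indicator A \<omega>) = ennreal (2 * t + (\<Sum>i\<in>{1..m}. t - Sx \<omega> i)) * indicator (Bset m t) \<omega>"
      using good
    proof eventually_elim
      case (elim \<omega>)
      show ?case
      proof (cases "\<omega> \<in> Bset m t")
        case True
        then have "\<omega> \<in> A" using iff[OF elim] by (simp add: A_def space_Y)
        moreover have "yule_length t \<omega> = 2 * t + (\<Sum>i\<in>{1..m}. t - Sx \<omega> i)"
          using length_B[OF _ True t0] elim by blast
        ultimately show ?thesis using True by simp
      next
        case False
        then have "\<omega> \<notin> A" using iff[OF elim] by (simp add: A_def)
        then show ?thesis using False by simp
      qed
    qed
  qed
  also have "\<dots> = ennreal L" unfolding L_def by (rule nnint_B[OF lam t0])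
  finally have nnL: "(\<integral>\<^sup>+\<omega>. ennreal (yule_length t \<omega> * indicator A \<omega>) \<partial>?Y) = ennreal L" .
  have L0: "0 \<le> L" using lam t0 by (simp add: L_def Cm_closed qf_nonneg Ff_nonneg)
  have iL: "(\<integral>\<omega>. yule_length t \<omega> * indicator A \<omega> \<partial>?Y) = L"
  proof -
    have "(\<integral>\<omega>. yule_length t \<omega> * indicator A \<omega> \<partial>?Y) = enn2real (\<integral>\<^sup>+\<omega>. ennreal (yule_length t \<omega> * indicator A \<omega>) \<partial>?Y)"
      by (rule integral_eq_nn_integral) (use Aset in \<open>auto intro!: mult_nonneg_nonneg length_nonneg\<close>)
    then show ?thesis using nnL L0 by simp
  qed
  have "yule_L lam n t = L / P"
    unfolding yule_L_def Let_def Y using iL mA by (simp add: A_def)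
  also have "\<dots> = 2 * t + real m / lam * (1 - yfun (lam * t))"
    unfolding L_def P_def by (rule final_arith[OF lam t])
  finally show "yule_L lam n t = 2 * t + (real n - 2) / lam * (1 - yfun (lam * t))"
    using nm by simp
qed


end
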